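(* In the setting described in the context, let $z\in\mathbb Z^{n(n-1)/2}$ and $g\in\{e_r,f_r,q^{\epsilon_r}\}$ (for admissible indices $r$). Then (i) $\mathcal D^{\bar v}([x-y]_q\, g\,T(v+z))=\mathcal D^{\bar v}([x-y]_q\, g\,T(v+\tau(z)))$ for all $z$; (ii) $\mathcal D^{\bar v}(g\,T(v+z))=-\mathcal D^{\bar v}(g\,T(v+\tau(z)))$ for all $z$ with $\tau(z)\neq z$.
   Context: Conventions. Fix $n\ge2$ and $q\in\mathbb C\setminus\{0,\pm1\}$ with a fixed $\ln q$; $q^x:=e^{x\ln q}$, $[x]_q:=\frac{q^x-q^{-x}}{q-q^{-1}}$, $1(q):=\{x\in\mathbb C:q^x=1\}$, and for $A\subseteq\mathbb Z$, $A+\frac{1(q)}2:=\{a+c/2: a\in A, c\in 1(q)\}$. Algebra. $P=\bigoplus_{i=1}^n\mathbb Z\epsilon_i$, $\langle\epsilon_i,\epsilon_j\rangle=\delta_{ij}$, $\alpha_i=\epsilon_i-\epsilon_{i+1}$. $U_q$ is the unital algebra generated by $e_i,f_i$ ($1\le i\le n-1$), $q^h$ ($h\in P$) with relations $q^0=1$, $q^hq^{h'}=q^{h+h'}$, $q^he_iq^{-h}=q^{\langle h,\alpha_i\rangle}e_i$, $q^hf_iq^{-h}=q^{-\langle h,\alpha_i\rangle}f_i$, $e_if_j-f_je_i=\delta_{ij}\frac{q^{\alpha_i}-q^{-\alpha_i}}{q-q^{-1}}$, quantum Serre relations $e_i^2e_j-(q+q^{-1})e_ie_je_i+e_je_i^2=0$,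 $f_i^2f_j-(q+q^{-1})f_if_jf_i+f_jf_i^2=0$ ($|i-j|=1$), and $e_ie_j=e_je_i$, $f_if_j=f_jf_i$ ($|i-j|>1$). Tableaux. For $w=(w_{rs})_{1\le s\le r\le n}$ (entries in $\mathbb C$ or in $\mathbb C(x,y)$), $T(w)$ is a formal symbol (Gelfand–Tsetlin tableau). $\delta^{rs}$ has $1$ at position $(r,s)$ and $0$ elsewhere; $\mathbb Z^{n(n-1)/2}$ denotes integer vectors supported on positions $(r,s)$ with $r\le n-1$. Relations. $\mathfrak V=\{(r,s):1\le s\le r\le n\}$. $\mathcal R$ is the set of formal relations $(r,s)\ge(r-1,t)$, $(r-1,t)>(r,s)$ ($2\le r\le n$, $1\le s\le r$, $1\le t\le r-1$) and $(n,s)\ge(n,t)$ ($s\ne t$). For $\mathcal C\subseteq\mathcal R$, $\mathfrak V(\mathcal C)$ is the set of points of $\mathfrak V$ occurring in relations of $\mathcal C$; $\mathcal C_1,\mathcal C_2$ are disconnected if $\mathfrak V(\mathcal C_1)\cap\mathfrak V(\mathcal C_2)=\emptyset$; $\mathcal C$ is indecomposable if it is not a union of two disconnected nonempty subsets. $p\succeq_{\mathcal C}p'$ means there is a chain $p=p_0,\dots,p_{m}=p'$ with each $p_a\ge p_{a+1}$ or $p_a>p_{a+1}$ in $\mathcal C$; $p\succ_{\mathcal C}p'$ if some link is strict. A cross is $\{(k,i)\ge(k-1,t),(k-1,s)>(k,j)\}$ with $i<j$, $s<t$. An indecomposable $\mathcal C$ is admissible if (i) for $2\le k\le n$, $(k,i)\succ_{\mathcal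 C}(k,j)$ only if $i<j$; (ii) $(n,i)\succeq_{\mathcal C}(n,j)$ only if $i<j$; (iii) $\mathcal C$ has no cross; (iv) for all $(k,i),(k,j)\in\mathfrak V(\mathcal C)$, $1\le k\le n-1$, $i<j$, there are $s,t$ with $\{(k,i)>(k+1,s),(k+1,s)\ge(k,j),(k,i)\ge(k-1,t),(k-1,t)>(k,j)\}\subseteq\mathcal C$, or with $s<t$ and $\{(k,i)>(k+1,s),(k+1,t)\ge(k,j)\}\subseteq\mathcal C$. A general $\mathcal C$ is admissible if every indecomposable component is. Satisfaction. $T(L)$ satisfies $(r,s)\ge(r',s')$ (resp. $>$) if $l_{rs}-l_{r's'}\in\mathbb Z_{\ge0}+\frac{1(q)}2$ (resp. $\mathbb Z_{>0}+\frac{1(q)}2$). $T(L)$ satisfies $\mathcal C$ if it satisfies all relations of $\mathcal C$ and $l_{ki}-l_{kj}\in\mathbb Z+\frac{1(q)}2$ ($i\neq j$) only if $(k,i),(k,j)$ lie in $\mathfrak V(\mathcal C')$ for one indecomposable component $\mathcal C'$. $\mathcal B_{\mathcal C}(T(L))=\{T(L+z):z\in\mathbb Z^{n(n-1)/2},\ T(L+z)\text{ satisfies }\mathcal C\}$. Gelfand–Tsetlin formulas: $q^{\epsilon_k}T(L)=q^{a_k}T(L)$, $a_k=\sum_{i=1}^kl_{ki}-\sum_{i=1}^{k-1}l_{k-1,i}+k$; $e_kT(L)=-\sum_{j=1}^k\frac{\prod_{i=1}^{k+1}[l_{k+1,i}-l_{kj}]_q}{\prod_{i\ne j}[l_{ki}-l_{kj}]_q}T(L+\delta^{kj})$;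 $f_kT(L)=\sum_{j=1}^k\frac{\prod_{i=1}^{k-1}[l_{k-1,i}-l_{kj}]_q}{\prod_{i\ne j}[l_{ki}-l_{kj}]_q}T(L-\delta^{kj})$, where terms whose tableau does not satisfy $\mathcal C$ are omitted. Standing data. $\mathcal C$ is admissible; $T(\bar v)$, $\bar v\in\mathbb C^{n(n+1)/2}$, is $(1,\mathcal C)$-singular: it satisfies $\mathcal C$ and there is exactly one triple $(k,i,j)$ with $1\le i<j\le k\le n-1$, $(k,i),(k,j)\notin\mathfrak V(\mathcal C)$ and $\bar v_{ki}-\bar v_{kj}\in\mathbb Z+\frac{1(q)}2$; moreover $\bar v_{ki}=\bar v_{kj}$. $\tau$ exchanges the $(k,i)$ and $(k,j)$ coordinates. $v$ is the vector with $v_{ki}=x$, $v_{kj}=y$ ($x,y$ indeterminates) and $v_{rs}=\bar v_{rs}$ otherwise; $V(T(v))=V_{\mathcal C}(T(v))$ is the $\mathbb C(x,y)$-space with basis $T(v+z)$, $T(\bar v+z)\in\mathcal B_{\mathcal C}(T(\bar v))$, with $U_q$ acting by the formulas above. $\overline{\mathcal H}$ is the set of $w$ with $w_{tr}\ne w_{ts}$ for all triples $(t,r,s)\ne(k,i,j)$, and $\mathcal F_{ij}$ is the space of rational functions (of $x,y$) smooth on $\overline{\mathcal H}$; $\mathcal F_{ij}\otimes V(T(v))$ is the set of finite sums $\sum f_zT(v+z)$, $f_z\in\mathcal F_{ij}$. For $f\in\mathcal F_{ij}$: $\mathrm{ev}(\bar v)(f)=f(\bar v)$ is the value at $x=\bar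 v_{ki},y=\bar v_{kj}$ and $\mathcal D^{\bar v}(f)=\frac{q-q^{-1}}{4\ln q}(\partial_xf-\partial_yf)(\bar v)$. $V_{\mathcal C}(T(\bar v))$ is the $\mathbb C$-space spanned by symbols $T(\bar v+z),\mathcal DT(\bar v+z)$ ($T(\bar v+z)\in\mathcal B_{\mathcal C}(T(\bar v))$) subject to $T(\bar v+z)=T(\bar v+\tau(z))$, $\mathcal DT(\bar v+z)+\mathcal DT(\bar v+\tau(z))=0$. On $\mathcal F_{ij}\otimes V(T(v))$: $\mathrm{ev}(\bar v)(fT(v+z))=f(\bar v)T(\bar v+z)$ and $\mathcal D^{\bar v}(fT(v+z))=\mathcal D^{\bar v}(f)T(\bar v+z)+f(\bar v)\mathcal DT(\bar v+z)$, extended linearly (both sides of the claim lie in $\mathcal F_{ij}\otimes V(T(v))$ before applying $\mathcal D^{\bar v}$). *)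

theory Defs
  imports "HOL-Analysis.Analysis"
begin

text \<open>q is represented through a fixed logarithm lq, q = exp lq; q^x := exp (x * lq).\<close>

definition qpow :: "complex \<Rightarrow> complex \<Rightarrow> complex" where
  "qpow lq x = exp (x * lq)"

definition qbr :: "complex \<Rightarrow> complex \<Rightarrow> complex" where
  "qbr lq x = (qpow lq x - qpow lq (- x)) / (qpow lq 1 - qpow lq (-1))"

definition one_q :: "complex \<Rightarrow> complex set" where
  "one_q lq = {c. qpow lq c = 1}"

definition halfZ :: "complex \<Rightarrow> int set \<Rightarrow> complex set" where
  "halfZ lq A = {of_int a + c / 2 | a c. a \<in> A \<and> c \<in> one_q lq}"

type_synonym pt = "nat \<times> nat"

datatype rel = Geq pt pt | Gt pt pt

fun rpts :: "rel \<Rightarrow> pt set" where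
  "rpts (Geq a b) = {a, b}"
| "rpts (Gt a b) = {a, b}"

definition Vset :: "rel set \<Rightarrow> pt set" where
  "Vset C = (\<Union>\<rho>\<in>C. rpts \<rho>)"

definition Rset :: "nat \<Rightarrow> rel set" where
  "Rset n =
     {Geq (r, s) (r - 1, t) | r s t. 2 \<le> r \<and> r \<le> n \<and> 1 \<le> s \<and> s \<le> r \<and> 1 \<le> t \<and> t \<le> r - 1}
   \<union> {Gt (r - 1, t) (r, s) | r s t. 2 \<le> r \<and> r \<le> n \<and> 1 \<le> s \<and> s \<le> r \<and> 1 \<le> t \<and> t \<le> r - 1}
   \<union> {Geq (n, s) (n, t) | s t. 1 \<le> s \<and> s \<le> n \<and> 1 \<le> t \<and> t \<le> n \<and> s \<noteq> t}"

definition disconnected :: "rel set \<Rightarrow> rel set \<Rightarrow> bool" where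
  "disconnected A B \<longleftrightarrow> Vset A \<inter> Vset B = {}"

definition indecomposable :: "rel set \<Rightarrow> bool" where
  "indecomposable C \<longleftrightarrow>
     \<not> (\<exists>A B. A \<noteq> {} \<and> B \<noteq> {} \<and> A \<union> B = C \<and> disconnected A B)"

definition components :: "rel set \<Rightarrow> rel set set" where
  "components C = {D. D \<subseteq> C \<and> D \<noteq> {} \<and> indecomposable D \<and>
      (\<forall>D'. D \<subseteq> D' \<and> D' \<subseteq> C \<and> indecomposable D' \<longrightarrow> D' = D)}"

definition links :: "rel set \<Rightarrow> (pt \<times> pt) set" where
  "links C = {(a, b). Geq a b \<in> C \<or> Gt a b \<in> C}"

definition strict_links :: "rel set \<Rightarrow> (pt \<times> pt) set" where
  "strict_links C = {(a, b). Gt a b \<in> C}"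

definition succeq :: "rel set \<Rightarrow> pt \<Rightarrow> pt \<Rightarrow> bool" where
  "succeq C p p' \<longleftrightarrow> (p, p') \<in> (links C)\<^sup>+"

definition succ :: "rel set \<Rightarrow> pt \<Rightarrow> pt \<Rightarrow> bool" where
  "succ C p p' \<longleftrightarrow> (p, p') \<in> (links C)\<^sup>* O strict_links C O (links C)\<^sup>*"

definition has_cross :: "rel set \<Rightarrow> bool" where
  "has_cross C \<longleftrightarrow> (\<exists>k i j s t. i < j \<and> s < t \<and>
      Geq (k, i) (k - 1, t) \<in> C \<and> Gt (k - 1, s) (k, j) \<in> C)"

definition admissible_indec :: "nat \<Rightarrow> rel set \<Rightarrow> bool" where
  "admissible_indec n C \<longleftrightarrow>
     (\<forall>k i j. 2 \<le> k \<and> k \<le> n \<and> succ C (k, i) (k, j) \<longrightarrow> i < j)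
   \<and> (\<forall>i j. succeq C (n, i) (n, j) \<longrightarrow> i < j)
   \<and> \<not> has_cross C
   \<and> (\<forall>k i j. (k, i) \<in> Vset C \<and> (k, j) \<in> Vset C \<and> 1 \<le> k \<and> k \<le> n - 1 \<and> i < j \<longrightarrow>
        (\<exists>s t. {Gt (k, i) (k + 1, s), Geq (k + 1, s) (k, j),
                Geq (k, i) (k - 1, t), Gt (k - 1, t) (k, j)} \<subseteq> C)
      \<or> (\<exists>s t. s < t \<and> {Gt (k, i) (k + 1, s), Geq (k + 1, t) (k, j)} \<subseteq> C))"

definition admissible :: "nat \<Rightarrow> rel set \<Rightarrow> bool" where
  "admissible n C \<longleftrightarrow> (\<forall>D\<in>components C. admissible_indec n D)"

type_synonym tab = "nat \<Rightarrow> nat \<Rightarrow> complex"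
type_synonym zvec = "nat \<Rightarrow> nat \<Rightarrow> int"

fun sat_rel :: "complex \<Rightarrow> tab \<Rightarrow> rel \<Rightarrow> bool" where
  "sat_rel lq L (Geq (r, s) (r', s')) \<longleftrightarrow> L r s - L r' s' \<in> halfZ lq {0..}"
| "sat_rel lq L (Gt (r, s) (r', s')) \<longleftrightarrow> L r s - L r' s' \<in> halfZ lq {0<..}"

text \<open>Satisfaction of C, where the integrality condition on pairs of a row is
  not imposed on the pairs of positions in X (X = {} gives the definition of the paper;
  X = the singular pair is used for the 1-singular tableau).\<close>
definition satC :: "nat \<Rightarrow> complex \<Rightarrow> rel set \<Rightarrow> (pt \<times> pt) set \<Rightarrow> tab \<Rightarrow> bool" where
  "satC n lq C X L \<longleftrightarrow> (\<forall>\<rho>\<in>C. sat_rel lq L \<rho>) \<and>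
     (\<forall>r s t. 1 \<le> s \<and> s \<le> r \<and> r \<le> n \<and> 1 \<le> t \<and> t \<le> r \<and> s \<noteq> t \<and>
        ((r, s), (r, t)) \<notin> X \<and> L r s - L r t \<in> halfZ lq UNIV \<longrightarrow>
        (\<exists>D\<in>components C. (r, s) \<in> Vset D \<and> (r, t) \<in> Vset D))"

definition sing_pair :: "nat \<Rightarrow> nat \<Rightarrow> nat \<Rightarrow> (pt \<times> pt) set" where
  "sing_pair k i j = {((k, i), (k, j)), ((k, j), (k, i))}"

definition one_singular :: "nat \<Rightarrow> complex \<Rightarrow> rel set \<Rightarrow> tab \<Rightarrow> nat \<Rightarrow> nat \<Rightarrow> nat \<Rightarrow> bool" where
  "one_singular n lq C vb k i j \<longleftrightarrow>
     satC n lq C (sing_pair k i j) vb \<and>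
     1 \<le> i \<and> i < j \<and> j \<le> k \<and> k \<le> n - 1 \<and>
     (k, i) \<notin> Vset C \<and> (k, j) \<notin> Vset C \<and> vb k i - vb k j \<in> halfZ lq UNIV \<and>
     (\<forall>k' i' j'. 1 \<le> i' \<and> i' < j' \<and> j' \<le> k' \<and> k' \<le> n - 1 \<and>
        (k', i') \<notin> Vset C \<and> (k', j') \<notin> Vset C \<and> vb k' i' - vb k' j' \<in> halfZ lq UNIV
        \<longrightarrow> (k', i', j') = (k, i, j)) \<and>
     vb k i = vb k j"

text \<open>z in Z^{n(n-1)/2}: integer vectors supported on rows 1..n-1.\<close>
definition zsupp :: "nat \<Rightarrow> zvec \<Rightarrow> bool" where
  "zsupp n z \<longleftrightarrow> (\<forall>r s. z r s \<noteq> 0 \<longrightarrow> 1 \<le> s \<and> s \<le> r \<and> r \<le> n - 1)"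

definition addz :: "tab \<Rightarrow> zvec \<Rightarrow> tab" where
  "addz L z = (\<lambda>r s. L r s + of_int (z r s))"

text \<open>B_C(T(vb)), as a set of shifts z.\<close>
definition Bset :: "nat \<Rightarrow> complex \<Rightarrow> rel set \<Rightarrow> tab \<Rightarrow> nat \<Rightarrow> nat \<Rightarrow> nat \<Rightarrow> zvec set" where
  "Bset n lq C vb k i j = {z. zsupp n z \<and> satC n lq C (sing_pair k i j) (addz vb z)}"

definition tau :: "nat \<Rightarrow> nat \<Rightarrow> nat \<Rightarrow> zvec \<Rightarrow> zvec" where
  "tau k i j z = (\<lambda>r s. if (r, s) = (k, i) then z k j else if (r, s) = (k, j) then z k i else z r s)"

definition delta :: "nat \<Rightarrow> nat \<Rightarrow> zvec" where
  "delta r s = (\<lambda>a b. if (a, b) = (r, s) then 1 else 0)"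

text \<open>The tableau v+z, with v_{ki} = x, v_{kj} = y, as a function of w = (x,y).\<close>
definition vtab :: "tab \<Rightarrow> nat \<Rightarrow> nat \<Rightarrow> nat \<Rightarrow> zvec \<Rightarrow> complex \<times> complex \<Rightarrow> tab" where
  "vtab vb k i j z w = (\<lambda>r s. (if (r, s) = (k, i) then fst w else if (r, s) = (k, j) then snd w
                              else vb r s) + of_int (z r s))"

type_synonym coef = "complex \<times> complex \<Rightarrow> complex"
type_synonym term_list = "(coef \<times> zvec) list"

datatype gen = GE nat | GF nat | GK nat

definition gen_ok :: "nat \<Rightarrow> gen \<Rightarrow> bool" where
  "gen_ok n g = (case g of GE r \<Rightarrow> 1 \<le> r \<and> r \<le> n - 1 | GF r \<Rightarrow> 1 \<le> r \<and> r \<le> n - 1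
                         | GK r \<Rightarrow> 1 \<le> r \<and> r \<le> n)"

text \<open>g T(v+z) by the Gelfand-Tsetlin formulas, as a list of terms f T(v+z');
  terms whose tableau is not in the basis are omitted.\<close>
definition act :: "nat \<Rightarrow> complex \<Rightarrow> rel set \<Rightarrow> tab \<Rightarrow> nat \<Rightarrow> nat \<Rightarrow> nat \<Rightarrow> gen \<Rightarrow> zvec \<Rightarrow> term_list" where
  "act n lq C vb k i j g z =
    filter (\<lambda>(f, z'). z' \<in> Bset n lq C vb k i j)
    (case g of
      GK r \<Rightarrow> [(\<lambda>w. let L = vtab vb k i j z w in
                    qpow lq ((\<Sum>s = 1..r. L r s) - (\<Sum>s = 1..r - 1. L (r - 1) s) + of_nat r), z)]
    | GE r \<Rightarrow> map (\<lambda>t. (\<lambda>w. let L = vtab vb k i j z w in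
                 - (\<Prod>s = 1..r + 1. qbr lq (L (r + 1) s - L r t))
                   / (\<Prod>s\<in>{1..r} - {t}. qbr lq (L r s - L r t)),
               (\<lambda>a b. z a b + delta r t a b))) [1..<r + 1]
    | GF r \<Rightarrow> map (\<lambda>t. (\<lambda>w. let L = vtab vb k i j z w in
                 (\<Prod>s = 1..r - 1. qbr lq (L (r - 1) s - L r t))
                   / (\<Prod>s\<in>{1..r} - {t}. qbr lq (L r s - L r t)),
               (\<lambda>a b. z a b - delta r t a b))) [1..<r + 1])"

definition mult_xy :: "complex \<Rightarrow> term_list \<Rightarrow> term_list" where
  "mult_xy lq ts = map (\<lambda>(f, z'). (\<lambda>w. qbr lq (fst w - snd w) * f w, z')) ts"

definition rep_at :: "complex \<times> complex \<Rightarrow> coef \<Rightarrow> coef \<Rightarrow> (complex \<times> complex) set \<Rightarrow> bool" where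
  "rep_at p f h U \<longleftrightarrow> open U \<and> p \<in> U \<and>
     (\<forall>w\<in>U. \<exists>a b. (h has_derivative (\<lambda>u. a * fst u + b * snd u)) (at w)) \<and>
     (\<forall>w\<in>U. w \<in> closure {w'\<in>U. f w' = h w'})"

definition inF :: "complex \<times> complex \<Rightarrow> coef \<Rightarrow> bool" where
  "inF p f \<longleftrightarrow> (\<exists>h U. rep_at p f h U)"

definition evF :: "complex \<times> complex \<Rightarrow> coef \<Rightarrow> complex" where
  "evF p f = (THE c. \<exists>h U. rep_at p f h U \<and> h p = c)"

definition dxyF :: "complex \<times> complex \<Rightarrow> coef \<Rightarrow> complex" where
  "dxyF p f = (THE d. \<exists>h U a b. rep_at p f h U \<and>
                 (h has_derivative (\<lambda>u. a * fst u + b * snd u)) (at p) \<and> d = a - b)"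

definition DF :: "complex \<Rightarrow> complex \<times> complex \<Rightarrow> coef \<Rightarrow> complex" where
  "DF lq p f = (qpow lq 1 - qpow lq (-1)) / (4 * lq) * dxyF p f"

datatype sym = Tsym zvec | DTsym zvec

text \<open>Elements of the free space on the symbols, as finitely supported coefficient functions.\<close>
definition Dop :: "complex \<Rightarrow> complex \<times> complex \<Rightarrow> term_list \<Rightarrow> sym \<Rightarrow> complex" where
  "Dop lq p ts = (\<lambda>s. sum_list (map (\<lambda>(f, z'). (case s of
        Tsym u \<Rightarrow> if u = z' then DF lq p f else 0
      | DTsym u \<Rightarrow> if u = z' then evF p f else 0)) ts))"

definition rel_gens :: "zvec set \<Rightarrow> (zvec \<Rightarrow> zvec) \<Rightarrow> (sym \<Rightarrow> complex) set" where
  "rel_gens B tv =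
     {(\<lambda>s. (if s = Tsym z then 1 else 0) - (if s = Tsym (tv z) then 1 else 0)) | z. z \<in> B}
   \<union> {(\<lambda>s. (if s = DTsym z then 1 else 0) + (if s = DTsym (tv z) then 1 else 0)) | z. z \<in> B}"

definition cspan :: "(sym \<Rightarrow> complex) set \<Rightarrow> (sym \<Rightarrow> complex) set" where
  "cspan G = {u. \<exists>A c. finite A \<and> A \<subseteq> G \<and> u = (\<lambda>s. \<Sum>g\<in>A. c g * g s)}"

text \<open>Equality in V_C(T(vb)) = free space modulo the defining relations.\<close>
definition vc_eq :: "zvec set \<Rightarrow> (zvec \<Rightarrow> zvec) \<Rightarrow> (sym \<Rightarrow> complex) \<Rightarrow> (sym \<Rightarrow> complex) \<Rightarrow> bool" where
  "vc_eq B tv u u' \<longleftrightarrow> (\<lambda>s. u s - u' s) \<in> cspan (rel_gens B tv)"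

definition all_inF :: "complex \<times> complex \<Rightarrow> term_list \<Rightarrow> bool" where
  "all_inF p ts \<longleftrightarrow> (\<forall>(f, z')\<in>set ts. inF p f)"

end

theory Submission imports Defs begin

definition sw :: "complex \<times> complex \<Rightarrow> complex \<times> complex" where
  "sw w = (snd w, fst w)"

definition goodF :: "coef \<Rightarrow> bool" where
  "goodF f \<longleftrightarrow> (\<exists>W. open W \<and> closure W = UNIV \<and> continuous_on W f)"

lemma clo_agree:
  fixes f g :: "'a::metric_space \<Rightarrow> 'b::metric_space"
  assumes "w \<in> closure S" "isCont f w" "isCont g w" "\<forall>x\<in>S. f x = g x"
  shows "f w = g w"
proof -
  from assms(1) obtain x where x: "\<forall>n. x n \<in> S" "x \<longlonglongrightarrow> w"
    using closure_sequential by blast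
  have "(\<lambda>n. f (x n)) \<longlonglongrightarrow> f w" using assms(2) x(2) isCont_tendsto_compose by blast
  moreover have "(\<lambda>n. g (x n)) \<longlonglongrightarrow> g w" using assms(3) x(2) isCont_tendsto_compose by blast
  moreover have "(\<lambda>n. f (x n)) = (\<lambda>n. g (x n))" using x(1) assms(4) by auto
  ultimately show ?thesis using LIMSEQ_unique by (metis (no_types))
qed

lemma rep_cont: "rep_at p f h U \<Longrightarrow> w \<in> U \<Longrightarrow> isCont h w"
  unfolding rep_at_def using has_derivative_continuous by blast

lemma rep_clo: "rep_at p f h U \<Longrightarrow> w \<in> U \<Longrightarrow> w \<in> closure {w'\<in>U. f w' = h w'}"
  unfolding rep_at_def by (elim conjE) (drule bspec, assumption)

lemma rep_open: "rep_at p f h U \<Longrightarrow> open U"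
  unfolding rep_at_def by (elim conjE)

lemma rep_p: "rep_at p f h U \<Longrightarrow> p \<in> U"
  unfolding rep_at_def by (elim conjE)

lemma rep_agree:
  assumes g: "goodF f" and r1: "rep_at p f h U" and r2: "rep_at p f h' U'"
  shows "\<forall>w\<in>U \<inter> U'. h w = h' w"
proof -
  obtain W where W: "open W" "closure W = UNIV" "continuous_on W f" using g goodF_def by blast
  have oU: "open U" "open U'" using rep_open[OF r1] rep_open[OF r2] by simp_all
  have fh: "f w = h w" if "w \<in> U \<inter> W" "rep_at p f h U" for w h U
  proof -
    have "w \<in> closure {w'\<in>U. f w' = h w'}" using rep_clo[OF that(2)] that(1) by simp
    moreover have "isCont f w" using continuous_on_eq_continuous_at[OF W(1), of f] W(3) that(1) by blast
    moreover have "isCont h w" using rep_cont[OF that(2)] that(1) by simp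
    ultimately show ?thesis by (rule clo_agree) auto
  qed
  show ?thesis
  proof
    fix w assume w: "w \<in> U \<inter> U'"
    have "closure ((U \<inter> U') \<inter> W) = closure (U \<inter> U')"
      using closure_open_Int_superset[of "U \<inter> U'" W] open_Int[OF oU] W(2) by simp
    moreover have "w \<in> closure (U \<inter> U')" using closure_subset w by (rule subsetD)
    ultimately have "w \<in> closure ((U \<inter> U') \<inter> W)" by simp
    moreover have "isCont h w" "isCont h' w" using rep_cont[OF r1] rep_cont[OF r2] w by blast+
    moreover have "\<forall>x\<in>(U \<inter> U') \<inter> W. h x = h' x"
    proof
      fix x assume x: "x \<in> (U \<inter> U') \<inter> W"
      have "f x = h x" using fh[of x U h] x r1 by blast
      moreover have "f x = h' x" using fh[of x U' h'] x r2 by blast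
      ultimately show "h x = h' x" by simp
    qed
    ultimately show "h w = h' w" by (rule clo_agree)
  qed
qed

lemma evF_eq:
  assumes g: "goodF f" and r: "rep_at p f h U"
  shows "evF p f = h p"
proof -
  have u: "c = h p" if ex: "\<exists>h' U'. rep_at p f h' U' \<and> h' p = c" for c
  proof -
    obtain h' U' where r': "rep_at p f h' U'" and c: "h' p = c" using ex by blast
    have pu: "p \<in> U \<inter> U'" using rep_p[OF r] rep_p[OF r'] by simp
    have "h p = h' p" using rep_agree[OF g r r'] pu by blast
    then show "c = h p" using c by simp
  qed
  have e: "\<exists>h' U'. rep_at p f h' U' \<and> h' p = h p" using r by blast
  show ?thesis unfolding evF_def
    apply (rule the_equality)
     apply (rule e)
    apply (erule u)
    done
qed

lemma lin_coef_eq: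
  assumes "(\<lambda>u::complex\<times>complex. a * fst u + b * snd u) = (\<lambda>u. a' * fst u + b' * snd u)"
  shows "a = a' \<and> b = b'"
proof -
  have "a = a'" using fun_cong[OF assms, of "(1,0)"] by simp
  moreover have "b = b'" using fun_cong[OF assms, of "(0,1)"] by simp
  ultimately show ?thesis by simp
qed

lemma dxyF_eq:
  assumes g: "goodF f" and r: "rep_at p f h U"
    and d: "(h has_derivative (\<lambda>u. a * fst u + b * snd u)) (at p)"
  shows "dxyF p f = a - b"
  unfolding dxyF_def
proof (rule the_equality)
  show "\<exists>h' U' a' b'. rep_at p f h' U' \<and> (h' has_derivative (\<lambda>u. a' * fst u + b' * snd u)) (at p) \<and> a - b = a' - b'"
    using r d by blast
  fix c assume "\<exists>h' U' a' b'. rep_at p f h' U' \<and> (h' has_derivative (\<lambda>u. a' * fst u + b' * snd u)) (at p) \<and> c = a' - b'"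
  then obtain h' U' a' b' where r': "rep_at p f h' U'"
     and d': "(h' has_derivative (\<lambda>u. a' * fst u + b' * snd u)) (at p)" and c: "c = a' - b'" by blast
  have ag: "\<forall>w\<in>U \<inter> U'. h w = h' w" using rep_agree[OF g r r'] .
  have "open (U \<inter> U')" "p \<in> U \<inter> U'" using rep_p[OF r] rep_p[OF r'] rep_open[OF r] rep_open[OF r'] by auto
  then have "(h' has_derivative (\<lambda>u. a * fst u + b * snd u)) (at p)"
    using has_derivative_transform_within_open[OF d, of "U \<inter> U'" h'] ag by simp
  then have "(\<lambda>u. a * fst u + b * snd u) = (\<lambda>u. a' * fst u + b' * snd u)"
    using d' has_derivative_unique by blast
  then show "c = a - b" using lin_coef_eq[of a b a' b'] c by simp
qed


lemma sw_sw[simp]: "sw (sw w) = w" by (simp add: sw_def)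

lemma sw_memI: "sw x \<in> S \<Longrightarrow> x \<in> sw ` S"
  by (rule image_eqI[of x sw "sw x"]) simp_all

lemma sw_img: "sw ` S = sw -` S"
proof
  show "sw ` S \<subseteq> sw -` S" by auto
  show "sw -` S \<subseteq> sw ` S"
  proof
    fix x assume "x \<in> sw -` S"
    then have "sw x \<in> S" by simp
    then show "x \<in> sw ` S" by (rule sw_memI)
  qed
qed

lemma cont_sw: "continuous_on UNIV sw"
  unfolding sw_def by (intro continuous_intros)

lemma linear_sw: "linear sw"
  by (rule linearI) (auto simp: sw_def)

lemma inj_sw: "inj sw" by (rule inj_on_inverseI[of _ sw]) simp

lemma open_sw: "open U \<Longrightarrow> open (sw ` U)"
  unfolding sw_img by (rule open_vimage[OF _ cont_sw])

lemma closure_sw: "closure (sw ` S) = sw ` closure S"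
  using closure_injective_linear_image[OF linear_sw inj_sw] by simp

lemma sw_der:
  assumes "(h has_derivative (\<lambda>u. a * fst u + b * snd u)) (at (sw w))"
  shows "((\<lambda>w. h (sw w)) has_derivative (\<lambda>u. b * fst u + a * snd u)) (at w)"
proof -
  have "(sw has_derivative sw) (at w)"
    unfolding sw_def by (intro derivative_eq_intros) auto
  from has_derivative_compose[OF this assms]
  show ?thesis by (simp add: sw_def algebra_simps)
qed

lemma rep_der: "rep_at p f h U \<Longrightarrow> \<exists>a b. (h has_derivative (\<lambda>u. a * fst u + b * snd u)) (at p)"
  unfolding rep_at_def by (elim conjE) (drule bspec, assumption)

lemma rep_sw:
  assumes r: "rep_at p f h U" and p: "sw p = p"
  shows "rep_at p (\<lambda>w. f (sw w)) (\<lambda>w. h (sw w)) (sw ` U)"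
  unfolding rep_at_def
proof (intro conjI ballI)
  show "open (sw ` U)" using open_sw rep_open[OF r] by simp
  have "sw p \<in> U" using rep_p[OF r] p by simp
  then show "p \<in> sw ` U" by (rule sw_memI)
  fix w assume w: "w \<in> sw ` U"
  then have sw: "sw w \<in> U" by auto
  have "\<forall>w\<in>U. \<exists>a b. (h has_derivative (\<lambda>u. a * fst u + b * snd u)) (at w)"
    using r unfolding rep_at_def by (elim conjE)
  then obtain a b where "(h has_derivative (\<lambda>u. a * fst u + b * snd u)) (at (sw w))"
    using sw by blast
  then show "\<exists>a b. ((\<lambda>w. h (sw w)) has_derivative (\<lambda>u. a * fst u + b * snd u)) (at w)"
    using sw_der by blast
  have "sw w \<in> closure {w'\<in>U. f w' = h w'}" using rep_clo[OF r sw] .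
  then have "w \<in> sw ` closure {w'\<in>U. f w' = h w'}" by (rule sw_memI)
  also have "\<dots> = closure (sw ` {w'\<in>U. f w' = h w'})" by (rule closure_sw[symmetric])
  also have "sw ` {w'\<in>U. f w' = h w'} = {w'\<in>sw ` U. f (sw w') = h (sw w')}"
    by (auto simp: image_iff)
  finally show "w \<in> closure {w'\<in>sw ` U. f (sw w') = h (sw w')}" .
qed

lemma rep_neg:
  assumes r: "rep_at p f h U"
  shows "rep_at p (\<lambda>w. - f w) (\<lambda>w. - h w) U"
  unfolding rep_at_def
proof (intro conjI ballI)
  show "open U" using rep_open[OF r] .
  show "p \<in> U" using rep_p[OF r] .
  fix w assume w: "w \<in> U"
  have "\<forall>w\<in>U. \<exists>a b. (h has_derivative (\<lambda>u. a * fst u + b * snd u)) (at w)"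
    using r unfolding rep_at_def by (elim conjE)
  then obtain a b where "(h has_derivative (\<lambda>u. a * fst u + b * snd u)) (at w)"
    using w by blast
  from has_derivative_minus[OF this]
  have "((\<lambda>w. - h w) has_derivative (\<lambda>u. (-a) * fst u + (-b) * snd u)) (at w)"
    by (simp add: algebra_simps)
  then show "\<exists>a b. ((\<lambda>w. - h w) has_derivative (\<lambda>u. a * fst u + b * snd u)) (at w)" by blast
  have "{w'\<in>U. - f w' = - h w'} = {w'\<in>U. f w' = h w'}" by simp
  then show "w \<in> closure {w'\<in>U. - f w' = - h w'}" using rep_clo[OF r w] by simp
qed

lemma surj_sw: "sw ` UNIV = UNIV"
  by (rule surjI[of sw sw]) simp

lemma goodF_sw: "goodF f \<Longrightarrow> goodF (\<lambda>w. f (sw w))"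
  unfolding goodF_def
proof (elim exE conjE)
  fix W assume W: "open W" "closure W = UNIV" "continuous_on W f"
  have "open (sw ` W)" using open_sw W by simp
  moreover have "closure (sw ` W) = UNIV" using closure_sw[of W] W(2) surj_sw by simp
  moreover have "continuous_on (sw ` W) (\<lambda>w. f (sw w))"
    by (rule continuous_on_compose2[OF W(3) continuous_on_subset[OF cont_sw]]) (auto simp: image_iff)
  ultimately show "\<exists>W. open W \<and> closure W = UNIV \<and> continuous_on W (\<lambda>w. f (sw w))" by blast
qed

lemma goodF_neg: "goodF f \<Longrightarrow> goodF (\<lambda>w. - f w)"
  unfolding goodF_def using continuous_on_minus by blast

lemma goodF_mult: "goodF f \<Longrightarrow> continuous_on UNIV c \<Longrightarrow> goodF (\<lambda>w. c w * f w)"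
  unfolding goodF_def
proof (elim exE conjE)
  fix W assume W: "open W" "closure W = UNIV" "continuous_on W f" and c: "continuous_on UNIV c"
  have "continuous_on W c" using continuous_on_subset[OF c] by simp
  then have "continuous_on W (\<lambda>w. c w * f w)" using W(3) by (rule continuous_on_mult)
  then show "\<exists>W. open W \<and> closure W = UNIV \<and> continuous_on W (\<lambda>w. c w * f w)" using W by blast
qed

lemma inF_rep: "inF p f \<Longrightarrow> \<exists>h U. rep_at p f h U" unfolding inF_def .

lemma DF_dxy: "DF lq p f = (qpow lq 1 - qpow lq (-1)) / (4 * lq) * dxyF p f"
  unfolding DF_def ..

lemma swap_vals:
  assumes g: "goodF f" and i: "inF p f" and p: "sw p = p"
  shows "evF p (\<lambda>w. f (sw w)) = evF p f" "DF lq p (\<lambda>w. f (sw w)) = - DF lq p f"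
    "evF p (\<lambda>w. - f (sw w)) = - evF p f" "DF lq p (\<lambda>w. - f (sw w)) = DF lq p f"
proof -
  obtain h U where r: "rep_at p f h U" using inF_rep[OF i] by blast
  obtain a b where d: "(h has_derivative (\<lambda>u. a * fst u + b * snd u)) (at p)"
    using rep_der[OF r] by blast
  have r2: "rep_at p (\<lambda>w. f (sw w)) (\<lambda>w. h (sw w)) (sw ` U)" using rep_sw[OF r p] .
  have r3: "rep_at p (\<lambda>w. - f (sw w)) (\<lambda>w. - h (sw w)) (sw ` U)" using rep_neg[OF r2] .
  have g2: "goodF (\<lambda>w. f (sw w))" using goodF_sw[OF g] .
  have g3: "goodF (\<lambda>w. - f (sw w))" using goodF_neg[OF g2] .
  have d2: "((\<lambda>w. h (sw w)) has_derivative (\<lambda>u. b * fst u + a * snd u)) (at p)"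
    using sw_der[of h a b p] d p by simp
  have d3: "((\<lambda>w. - h (sw w)) has_derivative (\<lambda>u. (-b) * fst u + (-a) * snd u)) (at p)"
    using has_derivative_minus[OF d2] by (simp add: algebra_simps)
  have e1: "evF p f = h p" using evF_eq[OF g r] .
  have e2: "evF p (\<lambda>w. f (sw w)) = h p" using evF_eq[OF g2 r2] p by simp
  have e3: "evF p (\<lambda>w. - f (sw w)) = - h p" using evF_eq[OF g3 r3] p by simp
  have x1: "dxyF p f = a - b" using dxyF_eq[OF g r d] .
  have x2: "dxyF p (\<lambda>w. f (sw w)) = b - a" using dxyF_eq[OF g2 r2 d2] .
  have x3: "dxyF p (\<lambda>w. - f (sw w)) = -b - (-a)" using dxyF_eq[OF g3 r3 d3] .
  show "evF p (\<lambda>w. f (sw w)) = evF p f" using e1 e2 by simp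
  show "evF p (\<lambda>w. - f (sw w)) = - evF p f" using e1 e3 by simp
  show "DF lq p (\<lambda>w. f (sw w)) = - DF lq p f" unfolding DF_dxy x1 x2 by (metis minus_diff_eq mult_minus_right)
  show "DF lq p (\<lambda>w. - f (sw w)) = DF lq p f" unfolding DF_dxy x1 x3 by simp
qed


definition aff :: "coef \<Rightarrow> bool" where
  "aff e \<longleftrightarrow> (\<exists>\<alpha> \<beta> c. \<forall>w. e w = \<alpha> * fst w + \<beta> * snd w + c)"

definition thin :: "coef \<Rightarrow> bool" where
  "thin g \<longleftrightarrow> (\<forall>w. g w = 0) \<or> interior {w. g w = 0} = {}"

lemma aff_diff: "aff e1 \<Longrightarrow> aff e2 \<Longrightarrow> aff (\<lambda>w. e1 w - e2 w)"
  unfolding aff_def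
proof (elim exE)
  fix a1 b1 c1 a2 b2 c2
  assume "\<forall>w. e1 w = a1 * fst w + b1 * snd w + c1" "\<forall>w. e2 w = a2 * fst w + b2 * snd w + c2"
  then have "\<forall>w. e1 w - e2 w = (a1 - a2) * fst w + (b1 - b2) * snd w + (c1 - c2)"
    by (simp add: algebra_simps)
  then show "\<exists>\<alpha> \<beta> c. \<forall>w. e1 w - e2 w = \<alpha> * fst w + \<beta> * snd w + c" by blast
qed

lemma aff_cont: "aff e \<Longrightarrow> continuous_on UNIV e"
  unfolding aff_def
proof (elim exE)
  fix a b c assume "\<forall>w. e w = a * fst w + b * snd w + c"
  then have "e = (\<lambda>w. a * fst w + b * snd w + c)" by auto
  then show "continuous_on UNIV e" by (simp add: continuous_intros)
qed

lemma aff_vtab: "aff (\<lambda>w. vtab vb k i j z w r s)"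
  unfolding aff_def vtab_def
  apply (rule exI[of _ "if (r, s) = (k, i) then 1 else 0"])
  apply (rule exI[of _ "if (r, s) = (k, i) then 0 else if (r, s) = (k, j) then 1 else 0"])
  apply (rule exI[of _ "(if (r, s) = (k, i) \<or> (r, s) = (k, j) then 0 else vb r s) + of_int (z r s)"])
  by auto

lemma cont_qpow: "continuous_on UNIV (qpow lq)"
  unfolding qpow_def by (intro continuous_intros)

lemma cont_qbr: "continuous_on UNIV (qbr lq)"
  unfolding qbr_def qpow_def divide_inverse by (intro continuous_intros)

lemma cont_comp_UNIV: "continuous_on UNIV g \<Longrightarrow> continuous_on UNIV e \<Longrightarrow> continuous_on UNIV (\<lambda>w. g (e w))"
  using continuous_on_compose2[of UNIV g UNIV e] by simp

lemma qbr_zero: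
  assumes q1: "exp lq \<noteq> 1" and q2: "exp lq \<noteq> -1" and z: "qbr lq u = 0"
  shows "u \<in> range (\<lambda>n::int. \<i> * of_int n * pi / lq)"
proof -
  have lq0: "lq \<noteq> 0" using q1 by auto
  have den: "qpow lq 1 - qpow lq (-1) \<noteq> 0"
  proof
    assume "qpow lq 1 - qpow lq (-1) = 0"
    then have ee: "exp lq = exp (- lq)" by (simp add: qpow_def)
    have "exp lq * exp (- lq) = 1" by (rule exp_minus_inverse)
    then have "exp lq * exp lq = 1" using ee by simp
    then have "(exp lq - 1) * (exp lq + 1) = 0" by (simp add: algebra_simps)
    then have "exp lq - 1 = 0 \<or> exp lq + 1 = 0" by simp
    moreover have "exp lq + 1 = 0 \<Longrightarrow> exp lq = -1" by (simp add: eq_neg_iff_add_eq_0)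
    ultimately show False using q1 q2 by auto
  qed
  then have "exp (u * lq) = exp (- u * lq)" using z by (simp add: qbr_def qpow_def)
  moreover have "exp (u * lq) * exp (- u * lq) = 1" using exp_minus_inverse[of "u * lq"] by simp
  ultimately have "exp (u * lq) * exp (u * lq) = 1" by simp
  then have "exp (2 * u * lq) = 1" by (simp add: exp_add[symmetric] algebra_simps)
  then obtain n :: int where "Re (2 * u * lq) = 0" "Im (2 * u * lq) = of_int (2 * n) * pi"
    using exp_eq_1 by blast
  then have "2 * u * lq = \<i> * (of_int (2 * n) * pi)" by (simp add: complex_eq_iff)
  then have "u = \<i> * of_int n * pi / lq" using lq0 by (simp add: field_simps)
  then show ?thesis by blast
qed

lemma thin_qbr_aff:
  assumes q1: "exp lq \<noteq> 1" and q2: "exp lq \<noteq> -1" and a: "aff e"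
  shows "thin (\<lambda>w. qbr lq (e w))"
proof -
  obtain \<alpha> \<beta> c where e: "\<And>w. e w = \<alpha> * fst w + \<beta> * snd w + c" using a unfolding aff_def by blast
  define R where "R = range (\<lambda>n::int. \<i> * of_int n * pi / lq)"
  have cR: "countable R" unfolding R_def by simp
  have zR: "qbr lq u = 0 \<Longrightarrow> u \<in> R" for u using qbr_zero[OF q1 q2] R_def by blast
  show ?thesis
  proof (cases "\<alpha> = 0 \<and> \<beta> = 0")
    case True
    then have "\<And>w. e w = c" using e by simp
    then show ?thesis unfolding thin_def by (cases "qbr lq c = 0") auto
  next
    case False
    have "interior {w. qbr lq (e w) = 0} = {}"
    proof (rule ccontr)
      assume "interior {w. qbr lq (e w) = 0} \<noteq> {}"
      then obtain w0 where "w0 \<in> interior {w. qbr lq (e w) = 0}" by blast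
      then obtain \<epsilon> where \<epsilon>: "\<epsilon> > 0" "ball w0 \<epsilon> \<subseteq> {w. qbr lq (e w) = 0}"
        by (meson open_contains_ball open_interior interior_subset subset_trans)
      define v where "v = (\<lambda>t::complex. if \<alpha> \<noteq> 0 then (t, 0::complex) else (0, t))"
      define m where "m = (if \<alpha> \<noteq> 0 then \<alpha> else \<beta>)"
      have m0: "m \<noteq> 0" using False m_def by auto
      have nv: "norm (v t) = norm t" for t unfolding v_def by (simp add: norm_Pair)
      have ev: "e (w0 + v t) = e w0 + m * t" for t
        unfolding e v_def m_def by (auto simp: algebra_simps)
      have "ball (e w0) (norm m * \<epsilon>) \<subseteq> R"
      proof
        fix u assume u: "u \<in> ball (e w0) (norm m * \<epsilon>)"
        define t where "t = (u - e w0) / m"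
        have et: "e (w0 + v t) = u" unfolding ev t_def using m0 by simp
        have "norm (u - e w0) < norm m * \<epsilon>" using u by (simp add: dist_norm norm_minus_commute)
        then have "norm t < \<epsilon>" unfolding t_def using m0 by (simp add: norm_divide field_simps)
        then have "w0 + v t \<in> ball w0 \<epsilon>" by (simp add: dist_norm nv)
        then have "qbr lq (e (w0 + v t)) = 0" using \<epsilon>(2) by blast
        then show "u \<in> R" using zR et by simp
      qed
      moreover have "uncountable (ball (e w0) (norm m * \<epsilon>))"
        by (rule uncountable_ball) (simp add: m0 \<epsilon>(1))
      ultimately show False using cR countable_subset by blast
    qed
    then show ?thesis unfolding thin_def by blast
  qed
qed


lemma thin_prod:
  assumes "finite S"
  shows "(\<forall>s\<in>S. continuous_on UNIV (g s) \<and> thin (g s)) \<Longrightarrow> thin (\<lambda>w. \<Prod>s\<in>S. g s w)"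
  using assms
proof (induction S rule: finite_induct)
  case empty
  then show ?case unfolding thin_def by simp
next
  case (insert a S)
  have ga: "continuous_on UNIV (g a)" "thin (g a)" using insert.prems by auto
  have tS: "thin (\<lambda>w. \<Prod>s\<in>S. g s w)" using insert.IH insert.prems by auto
  have eq: "(\<lambda>w. \<Prod>s\<in>insert a S. g s w) = (\<lambda>w. g a w * (\<Prod>s\<in>S. g s w))"
    using insert.hyps by simp
  show ?case unfolding eq
  proof (cases "(\<forall>w. g a w = 0) \<or> (\<forall>w. (\<Prod>s\<in>S. g s w) = 0)")
    case True
    then show "thin (\<lambda>w. g a w * (\<Prod>s\<in>S. g s w))" unfolding thin_def by auto
  next
    case False
    then have i1: "interior {w. g a w = 0} = {}" and i2: "interior {w. (\<Prod>s\<in>S. g s w) = 0} = {}"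
      using ga(2) tS unfolding thin_def by auto
    have cl: "closed {w. g a w = 0}"
      using closed_Collect_eq[OF ga(1), of "\<lambda>_. 0"] by simp
    have "{w. g a w * (\<Prod>s\<in>S. g s w) = 0} = {w. g a w = 0} \<union> {w. (\<Prod>s\<in>S. g s w) = 0}"
      by auto
    then have "interior {w. g a w * (\<Prod>s\<in>S. g s w) = 0} = {}"
      using interior_closed_Un_empty_interior[OF cl i2] i1 by simp
    then show "thin (\<lambda>w. g a w * (\<Prod>s\<in>S. g s w))" unfolding thin_def by blast
  qed
qed

lemma goodF_cont: "continuous_on UNIV f \<Longrightarrow> goodF f"
  unfolding goodF_def by (rule exI[of _ UNIV]) simp

lemma goodF_div:
  assumes N: "continuous_on UNIV N" and D: "continuous_on UNIV D" and t: "thin D"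
  shows "goodF (\<lambda>w. N w / D w)"
proof (cases "\<forall>w. D w = 0")
  case True
  have "(\<lambda>w. N w / D w) = (\<lambda>w. 0)"
  proof
    fix w have "D w = 0" using True by blast
    then show "N w / D w = 0" by simp
  qed
  then show ?thesis using goodF_cont[of "\<lambda>w. 0"] by simp
next
  case False
  then have i: "interior {w. D w = 0} = {}" using t unfolding thin_def by blast
  have cl: "closed {w. D w = 0}" using closed_Collect_eq[OF D, of "\<lambda>_. 0"] by simp
  define W where "W = - {w. D w = 0}"
  have "open W" unfolding W_def using cl by (simp add: open_Compl)
  moreover have "closure W = UNIV" unfolding W_def closure_complement i by simp
  moreover have "continuous_on W (\<lambda>w. N w / D w)"
  proof (rule continuous_on_divide)
    show "continuous_on W N" using continuous_on_subset[OF N] by simp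
    show "continuous_on W D" using continuous_on_subset[OF D] by simp
    show "\<forall>x\<in>W. D x \<noteq> 0" unfolding W_def by simp
  qed
  ultimately show ?thesis unfolding goodF_def by blast
qed

lemma cont_qf: "continuous_on UNIV (\<lambda>w. qbr lq (vtab vb k i j z w a b - vtab vb k i j z w c d))"
  by (rule cont_comp_UNIV[OF cont_qbr aff_cont[OF aff_diff[OF aff_vtab aff_vtab]]])

lemma thin_qf:
  assumes q1: "exp lq \<noteq> 1" and q2: "exp lq \<noteq> -1"
  shows "thin (\<lambda>w. qbr lq (vtab vb k i j z w a b - vtab vb k i j z w c d))"
  by (rule thin_qbr_aff[OF q1 q2 aff_diff[OF aff_vtab aff_vtab]])

lemma cont_prodq: "continuous_on UNIV (\<lambda>w. \<Prod>s\<in>S. qbr lq (vtab vb k i j z w (a s) (b s) - vtab vb k i j z w c d))"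
  by (rule continuous_on_prod) (rule cont_qf)

lemma thin_prodq:
  assumes q1: "exp lq \<noteq> 1" and q2: "exp lq \<noteq> -1" and f: "finite S"
  shows "thin (\<lambda>w. \<Prod>s\<in>S. qbr lq (vtab vb k i j z w (a s) (b s) - vtab vb k i j z w c d))"
  by (rule thin_prod[OF f]) (simp add: cont_qf thin_qf[OF q1 q2])

lemma cont_vtab: "continuous_on UNIV (\<lambda>w. vtab vb k i j z w a b)"
  by (rule aff_cont[OF aff_vtab])

lemma cont_fst_snd: "continuous_on UNIV (\<lambda>w::complex\<times>complex. qbr lq (fst w - snd w))"
  by (rule cont_comp_UNIV[OF cont_qbr]) (intro continuous_intros)



definition sg :: "nat \<Rightarrow> nat \<Rightarrow> nat \<Rightarrow> nat \<Rightarrow> nat \<Rightarrow> nat" where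
  "sg k i j a b = (if a = k then (if b = i then j else if b = j then i else b) else b)"

lemma vtab_tau: "i \<noteq> j \<Longrightarrow> vtab vb k i j (tau k i j z) w a b = vtab vb k i j z (sw w) a (sg k i j a b)"
  unfolding vtab_def tau_def sg_def sw_def by auto

lemma sg_sg: "i \<noteq> j \<Longrightarrow> sg k i j a (sg k i j a b) = b" by (auto simp: sg_def)

lemma sg_inj: "i \<noteq> j \<Longrightarrow> inj (sg k i j a)"
  by (rule inj_on_inverseI[of _ "sg k i j a"]) (rule sg_sg)

lemma sg_img_sub: "1 \<le> i \<Longrightarrow> i \<le> k \<Longrightarrow> 1 \<le> j \<Longrightarrow> j \<le> k \<Longrightarrow> sg k i j a ` {1..a} \<subseteq> {1..a}"
  by (auto simp: sg_def)

lemma sg_img: assumes "1 \<le> i" "i < j" "j \<le> k" shows "sg k i j a ` {1..a} = {1..a}"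
proof
  show "sg k i j a ` {1..a} \<subseteq> {1..a}" using sg_img_sub assms by simp
  show "{1..a} \<subseteq> sg k i j a ` {1..a}"
  proof
    fix b assume b: "b \<in> {1..a}"
    have sub: "sg k i j a ` {1..a} \<subseteq> {1..a}" using sg_img_sub assms by simp
    have "sg k i j a b \<in> {1..a}" using sub b by blast
    moreover have "b = sg k i j a (sg k i j a b)" using sg_sg assms by simp
    ultimately show "b \<in> sg k i j a ` {1..a}" by blast
  qed
qed

lemma sg_bij: assumes "1 \<le> i" "i < j" "j \<le> k" shows "bij_betw (sg k i j a) {1..a} {1..a}"
proof -
  have "inj_on (sg k i j a) {1..a}" using sg_inj[of i j k a] assms inj_on_subset[of "sg k i j a" UNIV "{1..a}"] by simp
  then show ?thesis using sg_img[OF assms] by (simp add: bij_betw_def)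
qed

lemma sg_bij_minus: assumes "1 \<le> i" "i < j" "j \<le> k"
  shows "bij_betw (sg k i j a) ({1..a} - {t}) ({1..a} - {sg k i j a t})"
proof -
  have inj: "inj (sg k i j a)" using sg_inj assms by simp
  have "sg k i j a ` ({1..a} - {t}) = sg k i j a ` {1..a} - sg k i j a ` {t}"
    using image_set_diff[OF inj] by simp
  then have "sg k i j a ` ({1..a} - {t}) = {1..a} - {sg k i j a t}" using sg_img[OF assms] by simp
  moreover have "inj_on (sg k i j a) ({1..a} - {t})" using inj inj_on_subset[of "sg k i j a" UNIV] by simp
  ultimately show ?thesis by (simp add: bij_betw_def)
qed

lemma prod_sg: assumes "1 \<le> i" "i < j" "j \<le> k"
  shows "(\<Prod>s\<in>{1..a}. F (sg k i j a s)) = (\<Prod>s\<in>{1..a}. (F s :: complex))"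
  using prod.reindex_bij_betw[OF sg_bij[OF assms]] .

lemma sum_sg: assumes "1 \<le> i" "i < j" "j \<le> k"
  shows "(\<Sum>s\<in>{1..a}. F (sg k i j a s)) = (\<Sum>s\<in>{1..a}. (F s :: complex))"
  using sum.reindex_bij_betw[OF sg_bij[OF assms]] .

lemma prod_sg_minus: assumes "1 \<le> i" "i < j" "j \<le> k"
  shows "(\<Prod>s\<in>{1..a} - {t}. F (sg k i j a s)) = (\<Prod>s\<in>{1..a} - {sg k i j a t}. (F s :: complex))"
  using prod.reindex_bij_betw[OF sg_bij_minus[OF assms]] .

lemma tau_shift_plus: "i \<noteq> j \<Longrightarrow>
   tau k i j (\<lambda>a b. z a b + delta r (sg k i j r t) a b) = (\<lambda>a b. tau k i j z a b + delta r t a b)"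
  unfolding tau_def delta_def sg_def by (intro ext) auto

lemma tau_shift_minus: "i \<noteq> j \<Longrightarrow>
   tau k i j (\<lambda>a b. z a b - delta r (sg k i j r t) a b) = (\<lambda>a b. tau k i j z a b - delta r t a b)"
  unfolding tau_def delta_def sg_def by (intro ext) auto

definition rawl :: "complex \<Rightarrow> tab \<Rightarrow> nat \<Rightarrow> nat \<Rightarrow> nat \<Rightarrow> gen \<Rightarrow> zvec \<Rightarrow> term_list" where
  "rawl lq vb k i j g z =
    (case g of
      GK r \<Rightarrow> [(\<lambda>w. let L = vtab vb k i j z w in
                    qpow lq ((\<Sum>s = 1..r. L r s) - (\<Sum>s = 1..r - 1. L (r - 1) s) + of_nat r), z)]
    | GE r \<Rightarrow> map (\<lambda>t. (\<lambda>w. let L = vtab vb k i j z w in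
                 - (\<Prod>s = 1..r + 1. qbr lq (L (r + 1) s - L r t))
                   / (\<Prod>s\<in>{1..r} - {t}. qbr lq (L r s - L r t)),
               (\<lambda>a b. z a b + delta r t a b))) [1..<r + 1]
    | GF r \<Rightarrow> map (\<lambda>t. (\<lambda>w. let L = vtab vb k i j z w in
                 (\<Prod>s = 1..r - 1. qbr lq (L (r - 1) s - L r t))
                   / (\<Prod>s\<in>{1..r} - {t}. qbr lq (L r s - L r t)),
               (\<lambda>a b. z a b - delta r t a b))) [1..<r + 1])"

lemma act_raw: "act n lq C vb k i j g z = filter (\<lambda>(f, z'). z' \<in> Bset n lq C vb k i j) (rawl lq vb k i j g z)"
  unfolding act_def rawl_def ..

definition Phi :: "nat \<Rightarrow> nat \<Rightarrow> nat \<Rightarrow> coef \<times> zvec \<Rightarrow> coef \<times> zvec" where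
  "Phi k i j = (\<lambda>(f, z'). ((\<lambda>w. f (sw w)), tau k i j z'))"

lemma Phi_app[simp]: "Phi k i j (f, z') = ((\<lambda>w. f (sw w)), tau k i j z')"
  unfolding Phi_def by simp

lemma mset_sg_upt: assumes "1 \<le> i" "i < j" "j \<le> k"
  shows "image_mset (sg k i j r) (mset [1..<r + 1]) = mset [1..<r + 1]"
proof -
  have e: "{1..<r + 1} = {1..r}" by auto
  have "inj_on (sg k i j r) {1..r}" using sg_inj[of i j k r] assms inj_on_subset[of "sg k i j r" UNIV] by simp
  then show ?thesis unfolding mset_upt e using image_mset_mset_set sg_img[OF assms] by metis
qed

lemma raw_tau:
  assumes ij: "1 \<le> i" "i < j" "j \<le> k"
  shows "mset (rawl lq vb k i j g (tau k i j z)) = image_mset (Phi k i j) (mset (rawl lq vb k i j g z))"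
proof -
  have ineq: "i \<noteq> j" using ij by simp
  show ?thesis
  proof (cases g)
    case (GK r)
    define V where "V = (\<lambda>w. vtab vb k i j z (sw w))"
    have e: "(\<lambda>w. let L = vtab vb k i j (tau k i j z) w in
                    qpow lq ((\<Sum>s = 1..r. L r s) - (\<Sum>s = 1..r - 1. L (r - 1) s) + of_nat r))
           = (\<lambda>w. (\<lambda>w. let L = vtab vb k i j z w in
                    qpow lq ((\<Sum>s = 1..r. L r s) - (\<Sum>s = 1..r - 1. L (r - 1) s) + of_nat r)) (sw w))"
    proof
      fix w
      have s1: "(\<Sum>s = 1..r. vtab vb k i j z (sw w) r (sg k i j r s)) = (\<Sum>s = 1..r. vtab vb k i j z (sw w) r s)"
        by (rule sum_sg[OF ij])
      have s2: "(\<Sum>s = 1..r - 1. vtab vb k i j z (sw w) (r - 1) (sg k i j (r - 1) s)) = (\<Sum>s = 1..r - 1. vtab vb k i j z (sw w) (r - 1) s)"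
        by (rule sum_sg[OF ij])
      show "(let L = vtab vb k i j (tau k i j z) w in
                    qpow lq ((\<Sum>s = 1..r. L r s) - (\<Sum>s = 1..r - 1. L (r - 1) s) + of_nat r))
           = (\<lambda>w. let L = vtab vb k i j z w in
                    qpow lq ((\<Sum>s = 1..r. L r s) - (\<Sum>s = 1..r - 1. L (r - 1) s) + of_nat r)) (sw w)"
        unfolding Let_def vtab_tau[OF ineq] s1 s2 ..
    qed
    show ?thesis unfolding rawl_def GK gen.case using e by simp
  next
    case (GE r)
    define ce where "ce = (\<lambda>z t. (\<lambda>w. let L = vtab vb k i j z w in
                 - (\<Prod>s = 1..r + 1. qbr lq (L (r + 1) s - L r t))
                   / (\<Prod>s\<in>{1..r} - {t}. qbr lq (L r s - L r t))))"
    define E where "E = (\<lambda>z t. (ce z t, (\<lambda>a b. z a b + delta r t a b)))"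
    have ceq: "ce (tau k i j z) t = (\<lambda>w. ce z (sg k i j r t) (sw w))" for t
    proof
      fix w
      define V where "V = vtab vb k i j z (sw w)"
      have n: "(\<Prod>s = 1..r + 1. qbr lq (V (r + 1) (sg k i j (r + 1) s) - V r (sg k i j r t)))
          = (\<Prod>s = 1..r + 1. qbr lq (V (r + 1) s - V r (sg k i j r t)))"
        by (rule prod_sg[OF ij])
      have d: "(\<Prod>s\<in>{1..r} - {t}. qbr lq (V r (sg k i j r s) - V r (sg k i j r t)))
          = (\<Prod>s\<in>{1..r} - {sg k i j r t}. qbr lq (V r s - V r (sg k i j r t)))"
        by (rule prod_sg_minus[OF ij])
      show "ce (tau k i j z) t w = ce z (sg k i j r t) (sw w)"
        unfolding ce_def Let_def vtab_tau[OF ineq] V_def[symmetric] n d ..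
    qed
    have Eeq: "E (tau k i j z) t = Phi k i j (E z (sg k i j r t))" for t
      unfolding E_def using ceq tau_shift_plus[OF ineq, where z=z and r=r and t=t] by simp
    have r1: "rawl lq vb k i j g (tau k i j z) = map (E (tau k i j z)) [1..<r + 1]"
      unfolding rawl_def GE gen.case E_def ce_def ..
    have r2: "rawl lq vb k i j g z = map (E z) [1..<r + 1]"
      unfolding rawl_def GE gen.case E_def ce_def ..
    have "map (E (tau k i j z)) [1..<r + 1] = map (\<lambda>t. Phi k i j (E z (sg k i j r t))) [1..<r + 1]"
      by (rule map_cong[OF refl]) (rule Eeq)
    then have "mset (rawl lq vb k i j g (tau k i j z)) = mset (map (\<lambda>t. Phi k i j (E z (sg k i j r t))) [1..<r + 1])"
      unfolding r1 by (rule arg_cong)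
    also have "\<dots> = image_mset (Phi k i j) (image_mset (E z) (image_mset (sg k i j r) (mset [1..<r + 1])))"
      by (simp only: mset_map image_mset.compositionality o_def)
    finally show ?thesis unfolding mset_sg_upt[OF ij] r2 by simp
  next
    case (GF r)
    define ce where "ce = (\<lambda>z t. (\<lambda>w. let L = vtab vb k i j z w in
                 (\<Prod>s = 1..r - 1. qbr lq (L (r - 1) s - L r t))
                   / (\<Prod>s\<in>{1..r} - {t}. qbr lq (L r s - L r t))))"
    define E where "E = (\<lambda>z t. (ce z t, (\<lambda>a b. z a b - delta r t a b)))"
    have ceq: "ce (tau k i j z) t = (\<lambda>w. ce z (sg k i j r t) (sw w))" for t
    proof
      fix w
      define V where "V = vtab vb k i j z (sw w)"
      have n: "(\<Prod>s = 1..r - 1. qbr lq (V (r - 1) (sg k i j (r - 1) s) - V r (sg k i j r t)))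
          = (\<Prod>s = 1..r - 1. qbr lq (V (r - 1) s - V r (sg k i j r t)))"
        by (rule prod_sg[OF ij])
      have d: "(\<Prod>s\<in>{1..r} - {t}. qbr lq (V r (sg k i j r s) - V r (sg k i j r t)))
          = (\<Prod>s\<in>{1..r} - {sg k i j r t}. qbr lq (V r s - V r (sg k i j r t)))"
        by (rule prod_sg_minus[OF ij])
      show "ce (tau k i j z) t w = ce z (sg k i j r t) (sw w)"
        unfolding ce_def Let_def vtab_tau[OF ineq] V_def[symmetric] n d ..
    qed
    have Eeq: "E (tau k i j z) t = Phi k i j (E z (sg k i j r t))" for t
      unfolding E_def using ceq tau_shift_minus[OF ineq, where z=z and r=r and t=t] by simp
    have r1: "rawl lq vb k i j g (tau k i j z) = map (E (tau k i j z)) [1..<r + 1]"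
      unfolding rawl_def GF gen.case E_def ce_def ..
    have r2: "rawl lq vb k i j g z = map (E z) [1..<r + 1]"
      unfolding rawl_def GF gen.case E_def ce_def ..
    have "map (E (tau k i j z)) [1..<r + 1] = map (\<lambda>t. Phi k i j (E z (sg k i j r t))) [1..<r + 1]"
      by (rule map_cong[OF refl]) (rule Eeq)
    then have "mset (rawl lq vb k i j g (tau k i j z)) = mset (map (\<lambda>t. Phi k i j (E z (sg k i j r t))) [1..<r + 1])"
      unfolding r1 by (rule arg_cong)
    also have "\<dots> = image_mset (Phi k i j) (image_mset (E z) (image_mset (sg k i j r) (mset [1..<r + 1])))"
      by (simp only: mset_map image_mset.compositionality o_def)
    finally show ?thesis unfolding mset_sg_upt[OF ij] r2 by simp
  qed
qed


lemma good_raw: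
  assumes q1: "exp lq \<noteq> 1" and q2: "exp lq \<noteq> -1"
  shows "\<forall>x\<in>set (rawl lq vb k i j g z). goodF (fst x)"
proof (cases g)
  case (GK r)
  have "continuous_on UNIV (\<lambda>w. let L = vtab vb k i j z w in
                    qpow lq ((\<Sum>s = 1..r. L r s) - (\<Sum>s = 1..r - 1. L (r - 1) s) + of_nat r))"
    unfolding Let_def
    by (rule cont_comp_UNIV[OF cont_qpow]) (intro continuous_intros cont_vtab)
  then show ?thesis unfolding rawl_def GK gen.case by (simp add: goodF_cont)
next
  case (GE r)
  have "goodF (\<lambda>w. let L = vtab vb k i j z w in
                 - (\<Prod>s = 1..r + 1. qbr lq (L (r + 1) s - L r t))
                   / (\<Prod>s\<in>{1..r} - {t}. qbr lq (L r s - L r t)))" for t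
    unfolding Let_def
  proof (rule goodF_div)
    show "continuous_on UNIV (\<lambda>w. - (\<Prod>s = 1..r + 1. qbr lq (vtab vb k i j z w (r + 1) s - vtab vb k i j z w r t)))"
      by (intro continuous_on_minus cont_prodq[where a="\<lambda>_. r + 1" and b="\<lambda>s. s"])
    show "continuous_on UNIV (\<lambda>w. \<Prod>s\<in>{1..r} - {t}. qbr lq (vtab vb k i j z w r s - vtab vb k i j z w r t))"
      by (rule cont_prodq[where a="\<lambda>_. r" and b="\<lambda>s. s"])
    show "thin (\<lambda>w. \<Prod>s\<in>{1..r} - {t}. qbr lq (vtab vb k i j z w r s - vtab vb k i j z w r t))"
      by (rule thin_prodq[OF q1 q2, where a="\<lambda>_. r" and b="\<lambda>s. s"]) simp
  qed
  then show ?thesis unfolding rawl_def GE gen.case by auto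
next
  case (GF r)
  have "goodF (\<lambda>w. let L = vtab vb k i j z w in
                 (\<Prod>s = 1..r - 1. qbr lq (L (r - 1) s - L r t))
                   / (\<Prod>s\<in>{1..r} - {t}. qbr lq (L r s - L r t)))" for t
    unfolding Let_def
  proof (rule goodF_div)
    show "continuous_on UNIV (\<lambda>w. (\<Prod>s = 1..r - 1. qbr lq (vtab vb k i j z w (r - 1) s - vtab vb k i j z w r t)))"
      by (rule cont_prodq[where a="\<lambda>_. r - 1" and b="\<lambda>s. s"])
    show "continuous_on UNIV (\<lambda>w. \<Prod>s\<in>{1..r} - {t}. qbr lq (vtab vb k i j z w r s - vtab vb k i j z w r t))"
      by (rule cont_prodq[where a="\<lambda>_. r" and b="\<lambda>s. s"])
    show "thin (\<lambda>w. \<Prod>s\<in>{1..r} - {t}. qbr lq (vtab vb k i j z w r s - vtab vb k i j z w r t))"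
      by (rule thin_prodq[OF q1 q2, where a="\<lambda>_. r" and b="\<lambda>s. s"]) simp
  qed
  then show ?thesis unfolding rawl_def GF gen.case by auto
qed

lemma qbr_neg: "qbr lq (- x) = - qbr lq x"
proof -
  have "qpow lq (- x) - qpow lq (- (- x)) = - (qpow lq x - qpow lq (- x))" by simp
  then show ?thesis unfolding qbr_def by (simp add: minus_divide_left)
qed

lemma sg_fix: "(a, b) \<noteq> (k, i) \<Longrightarrow> (a, b) \<noteq> (k, j) \<Longrightarrow> sg k i j a b = b"
  by (auto simp: sg_def)

lemma sg_notin: "(k, i) \<notin> V \<Longrightarrow> (k, j) \<notin> V \<Longrightarrow> (a, sg k i j a b) \<in> V \<Longrightarrow> sg k i j a b = b"
  by (auto simp: sg_def split: if_splits)

lemma addz_tau: "vb k i = vb k j \<Longrightarrow> i \<noteq> j \<Longrightarrow> addz vb (tau k i j z) = (\<lambda>r s. addz vb z r (sg k i j r s))"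
  unfolding addz_def tau_def sg_def by (intro ext) auto

lemma sat_rel_cong:
  assumes "\<forall>p\<in>rpts \<rho>. L' (fst p) (snd p) = L (fst p) (snd p)"
  shows "sat_rel lq L' \<rho> = sat_rel lq L \<rho>"
proof (cases \<rho>)
  case (Geq a b)
  then show ?thesis using assms by (cases a; cases b) auto
next
  case (Gt a b)
  then show ?thesis using assms by (cases a; cases b) auto
qed

lemma Vset_mono: "D \<subseteq> C \<Longrightarrow> Vset D \<subseteq> Vset C"
  unfolding Vset_def by blast

lemma tau_tau: "tau k i j (tau k i j z) = z"
  unfolding tau_def by (intro ext) auto

lemma tau_B:
  assumes os: "one_singular n lq C vb k i j" and z: "z \<in> Bset n lq C vb k i j"
  shows "tau k i j z \<in> Bset n lq C vb k i j"
proof -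
  have ij: "1 \<le> i" "i < j" "j \<le> k" "k \<le> n - 1" and nv: "(k, i) \<notin> Vset C" "(k, j) \<notin> Vset C"
    and vv: "vb k i = vb k j" and sat: "satC n lq C (sing_pair k i j) (addz vb z)"
    using os z unfolding one_singular_def Bset_def by auto
  have zs: "zsupp n z" using z unfolding Bset_def by simp
  have ineq: "i \<noteq> j" using ij by simp
  have zs': "zsupp n (tau k i j z)"
    using zs ij unfolding zsupp_def tau_def by (auto split: if_splits)
  define L where "L = addz vb z"
  have L': "addz vb (tau k i j z) = (\<lambda>r s. L r (sg k i j r s))"
    unfolding L_def using addz_tau[where vb=vb and k=k and i=i and j=j, OF vv ineq] .
  have rels: "\<forall>\<rho>\<in>C. sat_rel lq L \<rho>" using sat unfolding satC_def L_def by simp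
  have rels': "\<forall>\<rho>\<in>C. sat_rel lq (\<lambda>r s. L r (sg k i j r s)) \<rho>"
  proof
    fix \<rho> assume \<rho>: "\<rho> \<in> C"
    have "rpts \<rho> \<subseteq> Vset C" using \<rho> unfolding Vset_def by blast
    then have "\<forall>p\<in>rpts \<rho>. L (fst p) (sg k i j (fst p) (snd p)) = L (fst p) (snd p)"
      using nv sg_fix by (metis prod.collapse subsetD)
    then show "sat_rel lq (\<lambda>r s. L r (sg k i j r s)) \<rho>"
      using sat_rel_cong[of \<rho> "\<lambda>r s. L r (sg k i j r s)" L lq] rels \<rho> by simp
  qed
  have integ: "\<forall>r s t. 1 \<le> s \<and> s \<le> r \<and> r \<le> n \<and> 1 \<le> t \<and> t \<le> r \<and> s \<noteq> t \<and>
        ((r, s), (r, t)) \<notin> sing_pair k i j \<and> L r s - L r t \<in> halfZ lq UNIV \<longrightarrow>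
        (\<exists>D\<in>components C. (r, s) \<in> Vset D \<and> (r, t) \<in> Vset D)"
    using sat unfolding satC_def L_def by blast
  have integ': "\<forall>r s t. 1 \<le> s \<and> s \<le> r \<and> r \<le> n \<and> 1 \<le> t \<and> t \<le> r \<and> s \<noteq> t \<and>
        ((r, s), (r, t)) \<notin> sing_pair k i j \<and> L r (sg k i j r s) - L r (sg k i j r t) \<in> halfZ lq UNIV \<longrightarrow>
        (\<exists>D\<in>components C. (r, s) \<in> Vset D \<and> (r, t) \<in> Vset D)"
  proof (intro allI impI)
    fix r s t
    assume h: "1 \<le> s \<and> s \<le> r \<and> r \<le> n \<and> 1 \<le> t \<and> t \<le> r \<and> s \<noteq> t \<and>
        ((r, s), (r, t)) \<notin> sing_pair k i j \<and> L r (sg k i j r s) - L r (sg k i j r t) \<in> halfZ lq UNIV"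
    have sub: "sg k i j r ` {1..r} \<subseteq> {1..r}" using sg_img_sub ij by simp
    have "s \<in> {1..r}" "t \<in> {1..r}" using h by auto
    then have s1: "sg k i j r s \<in> {1..r}" and t1: "sg k i j r t \<in> {1..r}" using sub by blast+
    have st: "sg k i j r s \<noteq> sg k i j r t" using h sg_sg[OF ineq, of k r s] sg_sg[OF ineq, of k r t] by metis
    have nsp: "((r, sg k i j r s), (r, sg k i j r t)) \<notin> sing_pair k i j"
      using h ineq unfolding sing_pair_def sg_def by (auto split: if_splits)
    obtain D where D: "D \<in> components C" "(r, sg k i j r s) \<in> Vset D" "(r, sg k i j r t) \<in> Vset D"
      using integ s1 t1 st nsp h by (metis atLeastAtMost_iff)
    have "Vset D \<subseteq> Vset C" using D(1) Vset_mono unfolding components_def by blast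
    then have nvD: "(k, i) \<notin> Vset D" "(k, j) \<notin> Vset D" using nv by auto
    have "sg k i j r s = s" using sg_notin[OF nvD D(2)] .
    moreover have "sg k i j r t = t" using sg_notin[OF nvD D(3)] .
    ultimately show "\<exists>D\<in>components C. (r, s) \<in> Vset D \<and> (r, t) \<in> Vset D" using D by metis
  qed
  have "satC n lq C (sing_pair k i j) (addz vb (tau k i j z))"
    unfolding satC_def L' using rels' integ' by simp
  then show ?thesis unfolding Bset_def using zs' by simp
qed



lemma cspan_0: "(\<lambda>s. 0) \<in> cspan G"
  unfolding cspan_def by (rule CollectI, rule exI[of _ "{}"]) simp

lemma cspan_add:
  assumes "u \<in> cspan G" "u' \<in> cspan G"
  shows "(\<lambda>s. u s + u' s) \<in> cspan G"
proof -
  obtain A c where A: "finite A" "A \<subseteq> G" "u = (\<lambda>s. \<Sum>g\<in>A. c g * g s)"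
    using assms(1) unfolding cspan_def by blast
  obtain A' c' where A': "finite A'" "A' \<subseteq> G" "u' = (\<lambda>s. \<Sum>g\<in>A'. c' g * g s)"
    using assms(2) unfolding cspan_def by blast
  define d where "d = (\<lambda>g. (if g \<in> A then c g else 0) + (if g \<in> A' then c' g else 0))"
  have "(\<Sum>g\<in>A \<union> A'. d g * g s) = (\<Sum>g\<in>A. c g * g s) + (\<Sum>g\<in>A'. c' g * g s)" for s
  proof -
    have "(\<Sum>g\<in>A \<union> A'. d g * g s) = (\<Sum>g\<in>A \<union> A'. (if g \<in> A then c g * g s else 0))
        + (\<Sum>g\<in>A \<union> A'. (if g \<in> A' then c' g * g s else 0))"
    proof -
      have "d g * g s = (if g \<in> A then c g * g s else 0) + (if g \<in> A' then c' g * g s else 0)" for g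
        unfolding d_def by (simp add: distrib_right)
      then show ?thesis by (simp add: sum.distrib)
    qed
    also have "(\<Sum>g\<in>A \<union> A'. (if g \<in> A then c g * g s else 0)) = (\<Sum>g\<in>A. c g * g s)"
      using sum.inter_restrict[of "A \<union> A'" "\<lambda>g. c g * g s" A] A(1) A'(1)
      by (simp add: Int_absorb1)
    also have "(\<Sum>g\<in>A \<union> A'. (if g \<in> A' then c' g * g s else 0)) = (\<Sum>g\<in>A'. c' g * g s)"
      using sum.inter_restrict[of "A \<union> A'" "\<lambda>g. c' g * g s" A'] A(1) A'(1)
      by (simp add: Int_absorb1)
    finally show ?thesis .
  qed
  then have "(\<lambda>s. u s + u' s) = (\<lambda>s. \<Sum>g\<in>A \<union> A'. d g * g s)" using A(3) A'(3) by simp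
  moreover have "finite (A \<union> A')" "A \<union> A' \<subseteq> G" using A A' by auto
  ultimately show ?thesis unfolding cspan_def by blast
qed

lemma cspan_gen: "g \<in> G \<Longrightarrow> (\<lambda>s. a * g s) \<in> cspan G"
  unfolding cspan_def
  by (rule CollectI, rule exI[of _ "{g}"], rule exI[of _ "\<lambda>_. a"]) simp

definition genT :: "(zvec \<Rightarrow> zvec) \<Rightarrow> zvec \<Rightarrow> sym \<Rightarrow> complex" where
  "genT tv z = (\<lambda>s. (if s = Tsym z then 1 else 0) - (if s = Tsym (tv z) then 1 else 0))"

definition genD :: "(zvec \<Rightarrow> zvec) \<Rightarrow> zvec \<Rightarrow> sym \<Rightarrow> complex" where
  "genD tv z = (\<lambda>s. (if s = DTsym z then 1 else 0) + (if s = DTsym (tv z) then 1 else 0))"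

lemma genT_in: "z \<in> B \<Longrightarrow> genT tv z \<in> rel_gens B tv"
  unfolding rel_gens_def genT_def by blast

lemma genD_in: "z \<in> B \<Longrightarrow> genD tv z \<in> rel_gens B tv"
  unfolding rel_gens_def genD_def by blast

lemma cspan_step:
  assumes "z \<in> B" "u \<in> cspan (rel_gens B tv)"
    and "\<And>s. v s = (a * genT tv z s + b * genD tv z s) + u s"
  shows "v \<in> cspan (rel_gens B tv)"
proof -
  have "(\<lambda>s. (a * genT tv z s + b * genD tv z s) + u s) \<in> cspan (rel_gens B tv)"
    by (intro cspan_add cspan_gen genT_in genD_in assms(1,2))
  moreover have "v = (\<lambda>s. (a * genT tv z s + b * genD tv z s) + u s)" using assms(3) by (rule ext)
  ultimately show ?thesis by simp
qed

lemma Dop_Nil: "Dop lq p [] = (\<lambda>s. 0)"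
  unfolding Dop_def by simp

lemma Dop_Cons: "Dop lq p ((f, z') # xs) s = (case s of Tsym u \<Rightarrow> if u = z' then DF lq p f else 0
      | DTsym u \<Rightarrow> if u = z' then evF p f else 0) + Dop lq p xs s"
  unfolding Dop_def by simp

lemma sl_mset: "sum_list (map F xs) = sum_mset (image_mset F (mset xs))"
  by (induction xs) auto

lemma Dop_mset: "mset xs = mset ys \<Longrightarrow> Dop lq p xs = Dop lq p ys"
  unfolding Dop_def sl_mset by simp

definition Psi :: "nat \<Rightarrow> nat \<Rightarrow> nat \<Rightarrow> coef \<times> zvec \<Rightarrow> coef \<times> zvec" where
  "Psi k i j = (\<lambda>(f, z'). ((\<lambda>w. - f (sw w)), tau k i j z'))"

lemma Psi_app[simp]: "Psi k i j (f, z') = ((\<lambda>w. - f (sw w)), tau k i j z')"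
  unfolding Psi_def by simp

lemma span_ii:
  assumes p: "sw p = p"
  shows "(\<forall>x\<in>set A. goodF (fst x) \<and> inF p (fst x) \<and> snd x \<in> B) \<Longrightarrow>
     (\<lambda>s. Dop lq p A s - - Dop lq p (map (Phi k i j) A) s) \<in> cspan (rel_gens B (tau k i j))"
proof (induction A)
  case Nil
  then show ?case using cspan_0 by (simp add: Dop_Nil)
next
  case (Cons x A)
  obtain f z' where x: "x = (f, z')" by (cases x)
  have g: "goodF f" "inF p f" "z' \<in> B" using Cons.prems x by auto
  have IH: "(\<lambda>s. Dop lq p A s - - Dop lq p (map (Phi k i j) A) s) \<in> cspan (rel_gens B (tau k i j))"
    using Cons.IH Cons.prems by auto
  note sv = swap_vals[OF g(1) g(2) p]
  show ?case
  proof (rule cspan_step[OF g(3) IH])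
    fix s
    show "Dop lq p (x # A) s - - Dop lq p (map (Phi k i j) (x # A)) s =
      (DF lq p f * genT (tau k i j) z' s + evF p f * genD (tau k i j) z' s) +
      (Dop lq p A s - - Dop lq p (map (Phi k i j) A) s)"
      unfolding x list.map Phi_app Dop_Cons sv genT_def genD_def
      by (cases s) simp_all
  qed
qed

lemma span_i:
  assumes p: "sw p = p"
  shows "(\<forall>x\<in>set A. goodF (fst x) \<and> inF p (fst x) \<and> snd x \<in> B) \<Longrightarrow>
     (\<lambda>s. Dop lq p A s - Dop lq p (map (Psi k i j) A) s) \<in> cspan (rel_gens B (tau k i j))"
proof (induction A)
  case Nil
  then show ?case using cspan_0 by (simp add: Dop_Nil)
next
  case (Cons x A)
  obtain f z' where x: "x = (f, z')" by (cases x)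
  have g: "goodF f" "inF p f" "z' \<in> B" using Cons.prems x by auto
  have IH: "(\<lambda>s. Dop lq p A s - Dop lq p (map (Psi k i j) A) s) \<in> cspan (rel_gens B (tau k i j))"
    using Cons.IH Cons.prems by auto
  note sv = swap_vals[OF g(1) g(2) p]
  show ?case
  proof (rule cspan_step[OF g(3) IH])
    fix s
    show "Dop lq p (x # A) s - Dop lq p (map (Psi k i j) (x # A)) s =
      (DF lq p f * genT (tau k i j) z' s + evF p f * genD (tau k i j) z' s) +
      (Dop lq p A s - Dop lq p (map (Psi k i j) A) s)"
      unfolding x list.map Psi_app Dop_Cons sv genT_def genD_def
      by (cases s) simp_all
  qed
qed


definition Mx :: "complex \<Rightarrow> coef \<times> zvec \<Rightarrow> coef \<times> zvec" where
  "Mx lq = (\<lambda>(f, z'). (\<lambda>w. qbr lq (fst w - snd w) * f w, z'))"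

lemma mult_xy_map: "mult_xy lq ts = map (Mx lq) ts"
  unfolding mult_xy_def Mx_def ..

lemma Mx_Phi: "Mx lq (Phi k i j x) = Psi k i j (Mx lq x)"
proof -
  obtain f z' where x: "x = (f, z')" by (cases x)
  have "(\<lambda>w. qbr lq (fst w - snd w) * f (sw w)) = (\<lambda>w. - (qbr lq (fst (sw w) - snd (sw w)) * f (sw w)))"
  proof
    fix w
    have "qbr lq (fst (sw w) - snd (sw w)) = qbr lq (- (fst w - snd w))" by (simp add: sw_def)
    also have "\<dots> = - qbr lq (fst w - snd w)" by (rule qbr_neg)
    finally show "qbr lq (fst w - snd w) * f (sw w) = - (qbr lq (fst (sw w) - snd (sw w)) * f (sw w))"
      by simp
  qed
  then show ?thesis unfolding x Mx_def by simp
qed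

theorem proposition4p3:
  fixes n k i j :: nat and lq :: complex and C :: "rel set" and vb :: tab and g :: gen
  assumes "n \<ge> 2" and "exp lq \<noteq> 1" and "exp lq \<noteq> -1"
    and "C \<subseteq> Rset n" and "admissible n C"
    and "one_singular n lq C vb k i j"
    and "gen_ok n g"
  shows
    "(\<forall>z\<in>Bset n lq C vb k i j.
        all_inF (vb k i, vb k j) (mult_xy lq (act n lq C vb k i j g z)) \<and>
        all_inF (vb k i, vb k j) (mult_xy lq (act n lq C vb k i j g (tau k i j z))) \<longrightarrow>
        vc_eq (Bset n lq C vb k i j) (tau k i j)
          (Dop lq (vb k i, vb k j) (mult_xy lq (act n lq C vb k i j g z)))
          (Dop lq (vb k i, vb k j) (mult_xy lq (act n lq C vb k i j g (tau k i j z)))))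
   \<and> (\<forall>z\<in>Bset n lq C vb k i j. tau k i j z \<noteq> z \<and>
        all_inF (vb k i, vb k j) (act n lq C vb k i j g z) \<and>
        all_inF (vb k i, vb k j) (act n lq C vb k i j g (tau k i j z)) \<longrightarrow>
        vc_eq (Bset n lq C vb k i j) (tau k i j)
          (Dop lq (vb k i, vb k j) (act n lq C vb k i j g z))
          (\<lambda>s. - Dop lq (vb k i, vb k j) (act n lq C vb k i j g (tau k i j z)) s))"
proof -
  have os: "one_singular n lq C vb k i j" using assms(6) .
  have ij: "1 \<le> i" "i < j" "j \<le> k" and vv: "vb k i = vb k j"
    using os unfolding one_singular_def by auto
  have q1: "exp lq \<noteq> 1" and q2: "exp lq \<noteq> -1" using assms(2,3) .
  define p where "p = (vb k i, vb k j)"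
  have p: "sw p = p" unfolding p_def sw_def using vv by simp
  define B where "B = Bset n lq C vb k i j"
  have tB: "tau k i j z \<in> B" if "z \<in> B" for z using tau_B[OF os] that unfolding B_def by blast
  have PB: "(tau k i j z' \<in> B) = (z' \<in> B)" for z'
    using tB[of z'] tB[of "tau k i j z'"] tau_tau[of k i j z'] by auto
  define P where "P = (\<lambda>x :: coef \<times> zvec. snd x \<in> B)"
  have actf: "act n lq C vb k i j g z = filter P (rawl lq vb k i j g z)" for z
    unfolding act_raw P_def B_def by (intro filter_cong refl) auto
  have PPhi: "(\<lambda>x. P (Phi k i j x)) = P"
  proof
    fix x :: "coef \<times> zvec"
    obtain f z' where x: "x = (f, z')" by (cases x)
    show "P (Phi k i j x) = P x" unfolding x P_def using PB by simp
  qed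
  have actm: "mset (act n lq C vb k i j g (tau k i j z)) = image_mset (Phi k i j) (mset (act n lq C vb k i j g z))" for z
  proof -
    have "mset (act n lq C vb k i j g (tau k i j z)) = filter_mset P (mset (rawl lq vb k i j g (tau k i j z)))"
      unfolding actf by simp
    also have "\<dots> = filter_mset P (image_mset (Phi k i j) (mset (rawl lq vb k i j g z)))"
      using raw_tau[OF ij] by simp
    also have "\<dots> = image_mset (Phi k i j) (filter_mset (\<lambda>x. P (Phi k i j x)) (mset (rawl lq vb k i j g z)))"
      by (rule filter_mset_image_mset)
    also have "\<dots> = image_mset (Phi k i j) (mset (act n lq C vb k i j g z))"
      unfolding PPhi actf by simp
    finally show ?thesis .
  qed
  have gact: "goodF (fst x) \<and> snd x \<in> B" if "x \<in> set (act n lq C vb k i j g z)" for x z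
    using that good_raw[OF q1 q2] unfolding actf P_def by auto
  show ?thesis
  proof (intro conjI ballI impI)
    fix z assume z: "z \<in> Bset n lq C vb k i j"
      and h: "all_inF (vb k i, vb k j) (mult_xy lq (act n lq C vb k i j g z)) \<and>
        all_inF (vb k i, vb k j) (mult_xy lq (act n lq C vb k i j g (tau k i j z)))"
    define A where "A = mult_xy lq (act n lq C vb k i j g z)"
    have "mset (mult_xy lq (act n lq C vb k i j g (tau k i j z))) = mset (map (Psi k i j) A)"
    proof -
      have "mset (mult_xy lq (act n lq C vb k i j g (tau k i j z)))
          = image_mset (Mx lq) (image_mset (Phi k i j) (mset (act n lq C vb k i j g z)))"
        unfolding mult_xy_map mset_map actm ..
      also have "\<dots> = image_mset (\<lambda>x. Psi k i j (Mx lq x)) (mset (act n lq C vb k i j g z))"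
        by (simp add: image_mset.compositionality o_def Mx_Phi)
      also have "\<dots> = mset (map (Psi k i j) A)"
        unfolding A_def mult_xy_map by (simp add: image_mset.compositionality o_def)
      finally show ?thesis .
    qed
    then have Deq: "Dop lq p (mult_xy lq (act n lq C vb k i j g (tau k i j z))) = Dop lq p (map (Psi k i j) A)"
      by (rule Dop_mset)
    have hA: "\<forall>x\<in>set A. goodF (fst x) \<and> inF p (fst x) \<and> snd x \<in> B"
    proof
      fix x assume x: "x \<in> set A"
      then obtain y where y: "y \<in> set (act n lq C vb k i j g z)" "x = Mx lq y"
        unfolding A_def mult_xy_map by auto
      obtain f z' where yf: "y = (f, z')" by (cases y)
      have "goodF f" "z' \<in> B" using gact[OF y(1)] yf by auto
      then have "goodF (fst x)" "snd x \<in> B" using y(2) yf goodF_mult[OF _ cont_fst_snd] by (auto simp: Mx_def)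
      moreover have "inF p (fst x)" using h x unfolding A_def all_inF_def p_def by auto
      ultimately show "goodF (fst x) \<and> inF p (fst x) \<and> snd x \<in> B" by simp
    qed
    show "vc_eq (Bset n lq C vb k i j) (tau k i j)
          (Dop lq (vb k i, vb k j) (mult_xy lq (act n lq C vb k i j g z)))
          (Dop lq (vb k i, vb k j) (mult_xy lq (act n lq C vb k i j g (tau k i j z))))"
      unfolding vc_eq_def p_def[symmetric] B_def[symmetric] Deq A_def[symmetric]
      using span_i[OF p hA] .
  next
    fix z assume z: "z \<in> Bset n lq C vb k i j"
      and h: "tau k i j z \<noteq> z \<and> all_inF (vb k i, vb k j) (act n lq C vb k i j g z) \<and>
        all_inF (vb k i, vb k j) (act n lq C vb k i j g (tau k i j z))"
    define A where "A = act n lq C vb k i j g z"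
    have Deq: "Dop lq p (act n lq C vb k i j g (tau k i j z)) = Dop lq p (map (Phi k i j) A)"
      by (rule Dop_mset) (simp add: actm A_def)
    have hA: "\<forall>x\<in>set A. goodF (fst x) \<and> inF p (fst x) \<and> snd x \<in> B"
    proof
      fix x assume x: "x \<in> set A"
      have "goodF (fst x)" "snd x \<in> B" using gact x unfolding A_def by auto
      moreover have "inF p (fst x)" using h x unfolding A_def all_inF_def p_def by auto
      ultimately show "goodF (fst x) \<and> inF p (fst x) \<and> snd x \<in> B" by simp
    qed
    show "vc_eq (Bset n lq C vb k i j) (tau k i j)
          (Dop lq (vb k i, vb k j) (act n lq C vb k i j g z))
          (\<lambda>s. - Dop lq (vb k i, vb k j) (act n lq C vb k i j g (tau k i j z)) s)"
      unfolding vc_eq_def p_def[symmetric] B_def[symmetric] Deq A_def[symmetric]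
      using span_ii[OF p hA] .
  qed
qed

end
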